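(* Let $J=p\ge1$, $\sigma_\varepsilon^2>0$, $\sigma_\gamma^2>0$, $0\le\rho\le1$, and let $\mathbf{\Sigma}_\gamma=\sigma_\gamma^2\big((1-\rho)\mathbf{I}_J+\rho\mathbf{1}_J\mathbf{1}_J^{\mathrm T}\big)$ (compound symmetry). Let $\mathbf{A}_{\bm\beta}$ be a nonsingular $J\times J$ matrix and $I>0$. For an approximate design $\xi=(I_1,\dots,I_J)$ (reals $I_j\ge0$ with $\sum_jI_j=I$) let $$\mathbf{M}_{\bm\beta}(\xi)=\mathbf{A}_{\bm\beta}^{\mathrm T}\mathbf{M}_0(\xi)^{1/2}\big(\sigma_\varepsilon^2\mathbf{I}_J+\mathbf{M}_0(\xi)^{1/2}\mathbf{\Sigma}_\gamma\mathbf{M}_0(\xi)^{1/2}\big)^{-1}\mathbf{M}_0(\xi)^{1/2}\mathbf{A}_{\bm\beta},\quad \mathbf{M}_0(\xi)^{1/2}=\mathrm{diag}(\sqrt{I_1},\dots,\sqrt{I_J}).$$ Then the uniform design $\xi^*=(I/J,\dots,I/J)$ is the $D$-optimal approximate design.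
   Context: $\mathbf{A}_{\bm\beta}$ is the Jacobian of the mean response curve at a fixed parameter $\bm\beta$. $\bm\beta$ is estimable under $\xi$ if $\mathbf{A}_{\bm\beta}$ has full column rank and its columns lie in the column space of $\mathrm{diag}(I_1,\dots,I_J)$. A design $\xi^*$ is $D$-optimal if $\log\det\mathbf{M}_{\bm\beta}(\xi^* )\ge\log\det\mathbf{M}_{\bm\beta}(\xi)$ for all approximate designs $\xi$ with total $I$ under which $\bm\beta$ is estimable. *)

theory Defs
  imports "HOL-Analysis.Analysis"
begin

text \<open>The index type 'n has J = CARD('n) elements. An approximate design is a
vector of real group sizes I_j.\<close>

definition is_design :: "real \<Rightarrow> real^'n \<Rightarrow> bool" where
  "is_design I \<xi> \<longleftrightarrow> (\<forall>j. \<xi> $ j \<ge> 0) \<and> (\<Sum>j\<in>UNIV. \<xi> $ j) = I"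

definition uniform_design :: "real \<Rightarrow> real^'n" where
  "uniform_design I = (\<chi> j. I / real CARD('n))"

definition M0 :: "real^'n \<Rightarrow> real^'n^'n" where
  "M0 \<xi> = (\<chi> i j. if i = j then \<xi> $ i else 0)"

definition M0_sqrt :: "real^'n \<Rightarrow> real^'n^'n" where
  "M0_sqrt \<xi> = (\<chi> i j. if i = j then sqrt (\<xi> $ i) else 0)"

definition Sigma_gamma :: "real \<Rightarrow> real \<Rightarrow> real^'n^'n" where
  "Sigma_gamma sg2 \<rho> = sg2 *\<^sub>R ((1 - \<rho>) *\<^sub>R mat 1 + \<rho> *\<^sub>R (\<chi> i j. 1))"

definition M_beta :: "real \<Rightarrow> real \<Rightarrow> real \<Rightarrow> real^'n^'n \<Rightarrow> real^'n \<Rightarrow> real^'n^'n" where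
  "M_beta se2 sg2 \<rho> A \<xi> =
     transpose A ** M0_sqrt \<xi> **
     matrix_inv (se2 *\<^sub>R mat 1 + M0_sqrt \<xi> ** Sigma_gamma sg2 \<rho> ** M0_sqrt \<xi>) **
     M0_sqrt \<xi> ** A"

definition estimable :: "real^'n^'n \<Rightarrow> real^'n \<Rightarrow> bool" where
  "estimable A \<xi> \<longleftrightarrow> rank A = CARD('n) \<and> (\<forall>j. column j A \<in> range (\<lambda>x. M0 \<xi> *v x))"

definition D_optimal :: "real \<Rightarrow> real \<Rightarrow> real \<Rightarrow> real^'n^'n \<Rightarrow> real \<Rightarrow> real^'n \<Rightarrow> bool" where
  "D_optimal se2 sg2 \<rho> A I \<xi>s \<longleftrightarrow>
     is_design I \<xi>s \<and> estimable A \<xi>s \<and>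
     (\<forall>\<xi>. is_design I \<xi> \<and> estimable A \<xi> \<longrightarrow>
        ln (det (M_beta se2 sg2 \<rho> A \<xi>s)) \<ge> ln (det (M_beta se2 sg2 \<rho> A \<xi>)))"

end

theory Submission
  imports Defs
begin

lemma det_arrow_base:
  fixes g v :: "'n::finite \<Rightarrow> real"
  shows "det (\<chi> i j. if i = k then v j else (if i = j then g i else 0) :: real^'n^'n)
         = v k * (\<Prod>j\<in>UNIV-{k}. g j)"
proof -
  let ?N = "(\<chi> i j. if i = k then v j else (if i = j then g i else 0)) :: real^'n^'n"
  let ?U = "UNIV:: 'n set"
  let ?PU = "{p. p permutes ?U}"
  let ?pp = "\<lambda>p. of_int (sign p) * prod (\<lambda>i. ?N$i$p i) (UNIV :: 'n set)"
  have fU: "finite ?U" by simp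
  from finite_permutations[OF fU] have fPU: "finite ?PU" .
  have id0: "{id} \<subseteq> ?PU"
    by (auto simp: permutes_id)
  have p0: "\<forall>p \<in> ?PU - {id}. ?pp p = 0"
  proof
    fix p
    assume p: "p \<in> ?PU - {id}"
    have "\<exists>i. i \<noteq> k \<and> p i \<noteq> i"
    proof (rule ccontr)
      assume "\<not> ?thesis"
      then have fx: "\<And>i. i \<noteq> k \<Longrightarrow> p i = i" by blast
      have "p k = k"
      proof (rule ccontr)
        assume "p k \<noteq> k"
        then have "p (p k) = p k" using fx by blast
        moreover have "inj p" using p permutes_inj by blast
        ultimately show False using \<open>p k \<noteq> k\<close> by (metis injD)
      qed
      then have "p = id" using fx by fastforce
      then show False using p by blast
    qed
    then obtain i where i: "i \<noteq> k" "p i \<noteq> i" by blast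
    have "?N$i$p i = 0" using i by simp
    then have "prod (\<lambda>i. ?N$i$p i) ?U = 0"
      by (intro prod_zero[OF fU] bexI[of _ i]) auto
    then show "?pp p = 0" by simp
  qed
  from sum.mono_neutral_cong_left[OF fPU id0 p0] have "det ?N = prod (\<lambda>i. ?N$i$i) ?U"
    unfolding det_def by (simp add: sign_id)
  also have "\<dots> = ?N$k$k * prod (\<lambda>i. ?N$i$i) (?U - {k})"
    by (rule prod.remove) auto
  also have "\<dots> = v k * (\<Prod>j\<in>UNIV-{k}. g j)"
  proof -
    have "prod (\<lambda>i. ?N$i$i) (?U - {k}) = (\<Prod>j\<in>UNIV-{k}. g j)"
      by (intro prod.cong) auto
    then show ?thesis by simp
  qed
  finally show ?thesis .
qed

lemma det_arrow:
  fixes g u v :: "'n::finite \<Rightarrow> real"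
  assumes "k \<notin> S"
  shows "det (\<chi> i j. if i = k then v j else (if i = j then g i else 0) + (if i \<in> S then u i * v j else 0) :: real^'n^'n)
         = v k * (\<Prod>j\<in>UNIV-{k}. g j)"
proof -
  have "finite S" by simp
  then show ?thesis using assms
  proof (induction S)
    case empty
    have "((\<chi> i j. if i = k then v j else (if i = j then g i else 0) + (if i \<in> {} then u i * v j else 0)) :: real^'n^'n)
       = (\<chi> i j. if i = k then v j else (if i = j then g i else 0))"
      by (simp add: vec_eq_iff)
    then show ?case using det_arrow_base[of k v g] by simp
  next
    case (insert m S)
    let ?A = "(\<chi> i j. if i = k then v j else (if i = j then g i else 0) + (if i \<in> insert m S then u i * v j else 0)) :: real^'n^'n"
    have mk: "m \<noteq> k" using insert by auto
    have "det (\<chi> r. if r = m then row m ?A + (- u m) *s row k ?A else row r ?A) = det ?A"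
      by (rule det_row_operation[OF mk])
    moreover have "(\<chi> r. if r = m then row m ?A + (- u m) *s row k ?A else row r ?A) =
       (\<chi> i j. if i = k then v j else (if i = j then g i else 0) + (if i \<in> S then u i * v j else 0))"
      using insert mk by (auto simp: vec_eq_iff row_def)
    ultimately show ?case using insert by simp
  qed
qed

lemma det_diag_rank1_aux:
  fixes g u v :: "'n::finite \<Rightarrow> real"
  shows "det (\<chi> i j. (if i = j then g i else 0) + (if i \<in> S then u i * v j else 0) :: real^'n^'n)
         = (\<Prod>i\<in>UNIV. g i) + (\<Sum>k\<in>S. u k * v k * (\<Prod>j\<in>UNIV-{k}. g j))"
proof -
  have "finite S" by simp
  then show ?thesis
  proof (induction S)
    case empty
    then show ?case by (simp add: det_diagonal)
  next
    case (insert k S)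
    let ?R = "\<lambda>i. row i ((\<chi> i j. (if i = j then g i else 0) + (if i \<in> S then u i * v j else 0)) :: real^'n^'n)"
    let ?a = "(\<chi> j. if k = j then g k else 0) :: real^'n"
    have eq: "((\<chi> i j. (if i = j then g i else 0) + (if i \<in> insert k S then u i * v j else 0)) :: real^'n^'n)
       = (\<chi> i. if i = k then ?a + u k *s (\<chi> j. v j) else ?R i)"
      using insert by (auto simp: vec_eq_iff row_def)
    have e1: "(\<chi> i. if i = k then ?a else ?R i) = ((\<chi> i j. (if i = j then g i else 0) + (if i \<in> S then u i * v j else 0)) :: real^'n^'n)"
      using insert by (auto simp: vec_eq_iff row_def)
    have e2: "(\<chi> i. if i = k then (\<chi> j. v j) else ?R i) = ((\<chi> i j. if i = k then v j else (if i = j then g i else 0) + (if i \<in> S then u i * v j else 0)) :: real^'n^'n)"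
      using insert by (auto simp: vec_eq_iff row_def)
    show ?case
      unfolding eq det_row_add det_row_mul e1 e2 det_arrow[OF insert(2)]
      using insert by (simp add: sum.insert)
  qed
qed

lemma det_diag_rank1:
  fixes g u v :: "'n::finite \<Rightarrow> real"
  shows "det (\<chi> i j. (if i = j then g i else 0) + u i * v j :: real^'n^'n)
         = (\<Prod>i\<in>UNIV. g i) + (\<Sum>k\<in>UNIV. u k * v k * (\<Prod>j\<in>UNIV-{k}. g j))"
  using det_diag_rank1_aux[of g UNIV u v] by simp


lemma det_matrix_inv:
  fixes K :: "real^'n^'n"
  assumes "det K \<noteq> 0"
  shows "det (matrix_inv K) = 1 / det K"
proof -
  have "invertible K" using assms invertible_det_nz by blast
  then have "matrix_inv K ** K = mat 1"
    unfolding invertible_def matrix_inv_def by (rule someI2_ex) auto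
  then have "det (matrix_inv K) * det K = 1" by (metis det_I det_mul)
  then show ?thesis using assms by (simp add: field_simps)
qed

lemma diag_mult_left:
  "(((\<chi> i j. if i = j then f i else 0) :: real^'n^'n) ** X) $ i $ j = f i * X $ i $ j"
proof -
  have "(\<Sum>k\<in>UNIV. (if i = k then f i else 0) * X $ k $ j) = (\<Sum>k\<in>UNIV. if k = i then f i * X $ k $ j else 0)"
    by (intro sum.cong) auto
  then show ?thesis by (simp add: matrix_matrix_mult_def)
qed

lemma diag_mult_right:
  "(X ** ((\<chi> i j. if i = j then f i else 0) :: real^'n^'n)) $ i $ j = X $ i $ j * f j"
proof -
  have "(\<Sum>k\<in>UNIV. X $ i $ k * (if k = j then f k else 0)) = (\<Sum>k\<in>UNIV. if k = j then X $ i $ k * f j else 0)"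
    by (intro sum.cong) auto
  then show ?thesis by (simp add: matrix_matrix_mult_def)
qed

lemma K_eq:
  fixes \<xi> :: "real^'n"
  assumes "\<forall>j. \<xi> $ j \<ge> 0"
  shows "se2 *\<^sub>R mat 1 + M0_sqrt \<xi> ** Sigma_gamma sg2 \<rho> ** M0_sqrt \<xi> =
    (\<chi> i j. (if i = j then se2 + sg2 * (1 - \<rho>) * \<xi> $ i else 0) + (sg2 * \<rho> * sqrt (\<xi> $ i)) * sqrt (\<xi> $ j))"
proof -
  have sq: "sqrt (\<xi> $ i) * sqrt (\<xi> $ i) = \<xi> $ i" for i
    using assms by simp
  show ?thesis
    unfolding M0_sqrt_def
    apply (simp add: vec_eq_iff diag_mult_left diag_mult_right)
    apply (simp add: Sigma_gamma_def mat_def)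
    using sq by (auto simp: algebra_simps)
qed

lemma det_K:
  fixes \<xi> :: "real^'n"
  assumes "\<forall>j. \<xi> $ j \<ge> 0"
  shows "det (se2 *\<^sub>R mat 1 + M0_sqrt \<xi> ** Sigma_gamma sg2 \<rho> ** M0_sqrt \<xi>) =
    (\<Prod>i\<in>UNIV. se2 + sg2 * (1 - \<rho>) * \<xi> $ i) +
    (\<Sum>k\<in>UNIV. sg2 * \<rho> * \<xi> $ k * (\<Prod>j\<in>UNIV-{k}. se2 + sg2 * (1 - \<rho>) * \<xi> $ j))"
proof -
  have sq: "sqrt (\<xi> $ i) * sqrt (\<xi> $ i) = \<xi> $ i" for i
    using assms by simp
  have ab: "\<bar>\<xi> $ i\<bar> = \<xi> $ i" for i using assms by simp
  show ?thesis
    unfolding K_eq[OF assms] det_diag_rank1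
    by (simp add: mult.assoc sq ab)
qed

lemma det_M0_sqrt: "det (M0_sqrt \<xi>) = (\<Prod>i\<in>UNIV. sqrt (\<xi> $ i))"
  unfolding M0_sqrt_def by (simp add: det_diagonal)

definition dd :: "real \<Rightarrow> real \<Rightarrow> real \<Rightarrow> real \<Rightarrow> real" where
  "dd se2 sg2 \<rho> x = (se2 + sg2 * (1 - \<rho>) * x) / x"

definition FF :: "real \<Rightarrow> real \<Rightarrow> real \<Rightarrow> real^'n \<Rightarrow> real" where
  "FF se2 sg2 \<rho> \<xi> = (\<Prod>i\<in>UNIV. dd se2 sg2 \<rho> (\<xi> $ i)) +
     sg2 * \<rho> * (\<Sum>k\<in>UNIV. \<Prod>j\<in>UNIV-{k}. dd se2 sg2 \<rho> (\<xi> $ j))"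

lemma FF_pos:
  fixes \<xi> :: "real^'n"
  assumes "\<forall>j. \<xi> $ j > 0" "se2 > 0" "sg2 > 0" "0 \<le> \<rho>" "\<rho> \<le> 1"
  shows "FF se2 sg2 \<rho> \<xi> > 0"
proof -
  have xi: "\<xi> $ i > 0" for i using assms(1) by blast
  have d: "dd se2 sg2 \<rho> (\<xi> $ i) > 0" for i
  proof -
    have "0 \<le> sg2 * (1 - \<rho>) * \<xi> $ i"
      using assms less_imp_le[OF xi[of i]] by simp
    then show ?thesis unfolding dd_def by (rule divide_pos_pos[OF add_pos_nonneg[OF assms(2)] xi])
  qed
  have "(\<Prod>i\<in>UNIV. dd se2 sg2 \<rho> (\<xi> $ i)) > 0" using d by (simp add: prod_pos)
  moreover have "sg2 * \<rho> * (\<Sum>k\<in>UNIV. \<Prod>j\<in>UNIV-{k}. dd se2 sg2 \<rho> (\<xi> $ j)) \<ge> 0"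
    using d assms by (intro mult_nonneg_nonneg sum_nonneg prod_nonneg) (auto simp: less_imp_le)
  ultimately show ?thesis unfolding FF_def by linarith
qed

lemma det_M_beta:
  fixes \<xi> :: "real^'n" and A :: "real^'n^'n"
  assumes "\<forall>j. \<xi> $ j > 0" "se2 > 0" "sg2 > 0" "0 \<le> \<rho>" "\<rho> \<le> 1"
  shows "det (M_beta se2 sg2 \<rho> A \<xi>) = det A * det A / FF se2 sg2 \<rho> \<xi>"
proof -
  let ?K = "se2 *\<^sub>R mat 1 + M0_sqrt \<xi> ** Sigma_gamma sg2 \<rho> ** M0_sqrt \<xi>"
  let ?g = "\<lambda>i. se2 + sg2 * (1 - \<rho>) * \<xi> $ i"
  let ?P = "\<Prod>i\<in>UNIV. \<xi> $ i"
  have ge: "\<forall>j. \<xi> $ j \<ge> 0" using assms by (simp add: less_imp_le)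
  have Ppos: "?P > 0" using assms by (simp add: prod_pos)
  have gpos: "?g i > 0" for i using assms
    by (intro add_pos_nonneg mult_nonneg_nonneg) (auto simp: less_imp_le)
  have ddg: "dd se2 sg2 \<rho> (\<xi> $ i) = ?g i / \<xi> $ i" for i by (simp add: dd_def)
  have e1: "(\<Prod>i\<in>UNIV. ?g i) = ?P * (\<Prod>i\<in>UNIV. dd se2 sg2 \<rho> (\<xi> $ i))"
  proof -
    have "?g i = \<xi> $ i * dd se2 sg2 \<rho> (\<xi> $ i)" for i
      using assms(1)[rule_format, of i] by (simp add: ddg)
    then show ?thesis by (simp add: prod.distrib)
  qed
  have e2: "sg2 * \<rho> * \<xi> $ k * (\<Prod>j\<in>UNIV-{k}. ?g j) = ?P * (sg2 * \<rho> * (\<Prod>j\<in>UNIV-{k}. dd se2 sg2 \<rho> (\<xi> $ j)))" for k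
  proof -
    have "?P = \<xi> $ k * (\<Prod>j\<in>UNIV-{k}. \<xi> $ j)" by (rule prod.remove) auto
    moreover have "(\<Prod>j\<in>UNIV-{k}. ?g j) = (\<Prod>j\<in>UNIV-{k}. \<xi> $ j) * (\<Prod>j\<in>UNIV-{k}. dd se2 sg2 \<rho> (\<xi> $ j))"
    proof -
      have "?g i = \<xi> $ i * dd se2 sg2 \<rho> (\<xi> $ i)" for i
        using assms(1)[rule_format, of i] by (simp add: ddg)
      then show ?thesis by (simp add: prod.distrib)
    qed
    ultimately show ?thesis by simp
  qed
  have dK: "det ?K = ?P * FF se2 sg2 \<rho> \<xi>"
    unfolding det_K[OF ge] FF_def e1 e2 by (simp add: sum_distrib_left algebra_simps)
  have dKpos: "det ?K > 0" unfolding dK using Ppos FF_pos[OF assms] by simp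
  have sqP: "(\<Prod>i\<in>UNIV. sqrt (\<xi> $ i)) * (\<Prod>i\<in>UNIV. sqrt (\<xi> $ i)) = ?P"
    using ge by (simp add: prod.distrib[symmetric])
  have "det (M_beta se2 sg2 \<rho> A \<xi>) = det A * ((\<Prod>i\<in>UNIV. sqrt (\<xi> $ i)) * (\<Prod>i\<in>UNIV. sqrt (\<xi> $ i))) / det ?K * det A"
    unfolding M_beta_def by (simp add: det_mul det_M0_sqrt det_matrix_inv dKpos[THEN less_imp_neq, symmetric])
  also have "\<dots> = det A * det A / FF se2 sg2 \<rho> \<xi>"
  proof -
    have nz: "\<xi> $ a \<noteq> 0" for a using assms(1) by (metis less_irrefl)
    show ?thesis unfolding sqP dK using Ppos FF_pos[OF assms] nz by (simp add: field_simps)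
  qed
  finally show ?thesis .
qed


lemma psi_convex:
  fixes se2 b :: real
  assumes "se2 > 0" "b \<ge> 0"
  shows "convex_on {0<..} (\<lambda>x. ln (se2 + b * x) - ln x)"
proof (rule f''_ge0_imp_convex[where f' = "\<lambda>x. b / (se2 + b * x) - 1 / x"
      and f'' = "\<lambda>x. 1 / x^2 - (b / (se2 + b * x))^2"])
  show "convex {0::real<..}" by simp
next
  fix x :: real assume "x \<in> {0<..}"
  then have x: "x > 0" by simp
  have p: "se2 + b * x > 0" using assms x by (simp add: add_pos_nonneg)
  show "((\<lambda>x. ln (se2 + b * x) - ln x) has_real_derivative b / (se2 + b * x) - 1 / x) (at x)"
    using x p by (auto intro!: derivative_eq_intros simp: field_simps)
  show "((\<lambda>x. b / (se2 + b * x) - 1 / x) has_real_derivative 1 / x^2 - (b / (se2 + b * x))^2) (at x)"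
    using x p by (auto intro!: derivative_eq_intros simp: field_simps power2_eq_square)
  have "b / (se2 + b * x) \<le> 1 / x"
    using x p assms by (simp add: field_simps)
  moreover have "0 \<le> b / (se2 + b * x)" using p assms by simp
  ultimately have "(b / (se2 + b * x))^2 \<le> (1/x)^2" by (rule power_mono)
  then show "0 \<le> 1 / x^2 - (b / (se2 + b * x))^2" by (simp add: power_divide)
qed

lemma jensen_part:
  fixes \<xi> :: "real^'n"
  assumes pos: "\<forall>j. \<xi> $ j > 0" and sum: "(\<Sum>j\<in>UNIV. \<xi> $ j) = I"
    and "se2 > 0" "sg2 > 0" "0 \<le> \<rho>" "\<rho> \<le> 1"
  shows "real CARD('n) * ln (dd se2 sg2 \<rho> (I / real CARD('n))) \<le> (\<Sum>j\<in>UNIV. ln (dd se2 sg2 \<rho> (\<xi> $ j)))"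
proof -
  let ?b = "sg2 * (1 - \<rho>)"
  let ?J = "real CARD('n)"
  let ?\<psi> = "\<lambda>x. ln (se2 + ?b * x) - ln x"
  have b: "?b \<ge> 0" using assms by simp
  have Jpos: "?J > 0" by simp
  have Ipos: "I > 0" using pos sum by (metis UNIV_not_empty finite sum_pos)
  have psi: "ln (dd se2 sg2 \<rho> x) = ?\<psi> x" if "x > 0" for x
  proof -
    have "se2 + ?b * x > 0" using that assms b by (simp add: add_pos_nonneg)
    then show ?thesis unfolding dd_def using that by (simp add: ln_div mult.assoc)
  qed
  have A: "?\<psi> (\<Sum>i\<in>UNIV. (1 / ?J) *\<^sub>R (\<xi> $ i)) \<le> (\<Sum>i\<in>UNIV. (1 / ?J) * ?\<psi> (\<xi> $ i))"
    by (rule convex_on_sum[OF _ _ psi_convex[OF assms(3) b]]) (use pos in auto)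
  have B: "(\<Sum>i\<in>UNIV. (1 / ?J) *\<^sub>R (\<xi> $ i)) = I / ?J"
    using sum by (simp add: sum_divide_distrib[symmetric])
  have "?\<psi> (I / ?J) \<le> (\<Sum>i\<in>UNIV. (1 / ?J) * ?\<psi> (\<xi> $ i))"
    using A unfolding B .
  then have "?\<psi> (I / ?J) \<le> (1 / ?J) * (\<Sum>i\<in>UNIV. ?\<psi> (\<xi> $ i))"
    by (simp only: sum_distrib_left[symmetric])
  then have "?J * ?\<psi> (I / ?J) \<le> (\<Sum>i\<in>UNIV. ?\<psi> (\<xi> $ i))"
    using Jpos by (simp add: field_simps)
  moreover have "ln (dd se2 sg2 \<rho> (I / ?J)) = ?\<psi> (I / ?J)" using Ipos Jpos by (intro psi) simp
  moreover have "(\<Sum>j\<in>UNIV. ln (dd se2 sg2 \<rho> (\<xi> $ j))) = (\<Sum>i\<in>UNIV. ?\<psi> (\<xi> $ i))"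
    using pos by (intro sum.cong psi) auto
  ultimately show ?thesis by simp
qed

lemma key_ineq:
  fixes d :: "'n::finite \<Rightarrow> real"
  assumes dpos: "\<forall>j. d j > 0" and Dpos: "D > 0" and c: "c \<ge> 0"
    and L: "real CARD('n) * ln D \<le> (\<Sum>j\<in>UNIV. ln (d j))"
  shows "D ^ CARD('n) + c * (real CARD('n) * D ^ (CARD('n) - 1)) \<le>
         (\<Prod>j\<in>UNIV. d j) + c * (\<Sum>k\<in>UNIV. \<Prod>j\<in>UNIV-{k}. d j)"
proof -
  let ?J = "CARD('n)"
  let ?P = "\<Prod>j\<in>UNIV. d j"
  have Ppos: "?P > 0" using dpos by (simp add: prod_pos)
  have "?P = exp (\<Sum>j\<in>UNIV. ln (d j))" using dpos by (simp add: exp_sum)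
  moreover have "D ^ ?J = exp (real ?J * ln D)" using Dpos by (simp add: exp_of_nat_mult)
  ultimately have P1: "D ^ ?J \<le> ?P" using L by simp
  have x: "(\<Prod>j\<in>UNIV-{k}. d j) = ?P / d k" for k
  proof -
    have e: "?P = d k * (\<Prod>j\<in>UNIV-{k}. d j)" by (rule prod.remove) auto
    have "d k \<noteq> 0" using dpos by (metis less_irrefl)
    then show ?thesis by (simp add: e)
  qed
  have Jge: "?J \<ge> 1" by (simp add: Suc_leI)
  have prodx: "(\<Prod>k\<in>UNIV. ?P / d k) = ?P ^ (?J - 1)"
  proof -
    have "(\<Prod>k\<in>UNIV. ?P / d k) = ?P ^ ?J / ?P" by (simp add: prod_dividef)
    also have "\<dots> = ?P ^ (?J - 1)" using Ppos Jge
      by (metis One_nat_def Suc_diff_le diff_Suc_Suc minus_nat.diff_0 nonzero_mult_div_cancel_left less_irrefl power_Suc)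
    finally show ?thesis .
  qed
  have am: "(\<Sum>k\<in>UNIV. (?P / d k) / card (UNIV::'n set)) \<ge> (\<Prod>k\<in>UNIV. ?P / d k) powr (1 / card (UNIV::'n set))"
    by (rule arith_geom_mean) (use dpos Ppos in \<open>auto intro: less_imp_le\<close>)
  have "(D ^ (?J - 1)) = ((D ^ (?J - 1)) ^ ?J) powr (1 / ?J)"
  proof -
    have "((D ^ (?J - 1)) ^ ?J) powr (1 / ?J) = ((D ^ (?J - 1)) powr ?J) powr (1 / ?J)"
      using Dpos by (simp add: powr_realpow)
    also have "\<dots> = D ^ (?J - 1)" using Dpos by (simp add: powr_powr)
    finally show ?thesis by simp
  qed
  also have "\<dots> \<le> (?P ^ (?J - 1)) powr (1 / ?J)"
  proof (rule powr_mono2)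
    have "(D ^ (?J - 1)) ^ ?J = (D ^ ?J) ^ (?J - 1)" by (simp add: power_mult[symmetric] mult.commute)
    also have "\<dots> \<le> ?P ^ (?J - 1)" using P1 Dpos by (intro power_mono) auto
    finally show "(D ^ (?J - 1)) ^ ?J \<le> ?P ^ (?J - 1)" .
  qed (use Dpos in auto)
  also have "\<dots> \<le> (\<Sum>k\<in>UNIV. (?P / d k)) / ?J"
    using am prodx by (simp add: sum_divide_distrib)
  finally have "real ?J * D ^ (?J - 1) \<le> (\<Sum>k\<in>UNIV. \<Prod>j\<in>UNIV-{k}. d j)"
    by (simp add: x field_simps)
  then have "c * (real ?J * D ^ (?J - 1)) \<le> c * (\<Sum>k\<in>UNIV. \<Prod>j\<in>UNIV-{k}. d j)"
    using c by (rule mult_left_mono)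
  then show ?thesis using P1 by linarith
qed


lemma M0_mult: "M0 \<xi> *v x = (\<chi> i. \<xi> $ i * x $ i)"
proof -
  have "(\<Sum>j\<in>UNIV. (if i = j then \<xi> $ i else 0) * x $ j) = (\<Sum>j\<in>UNIV. if j = i then \<xi> $ i * x $ j else 0)" for i
    by (intro sum.cong) auto
  then show ?thesis by (simp add: M0_def matrix_vector_mult_def vec_eq_iff)
qed

lemma est_pos:
  fixes A :: "real^'n^'n"
  assumes "invertible A" "estimable A \<xi>" "\<forall>j. \<xi> $ j \<ge> 0"
  shows "\<xi> $ k > 0"
proof (rule ccontr)
  assume "\<not> \<xi> $ k > 0"
  then have z: "\<xi> $ k = 0" using assms(3) by (metis order_le_less)
  have "A $ k $ j = 0" for j
  proof -
    obtain x where "column j A = M0 \<xi> *v x" using assms(2) unfolding estimable_def by blast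
    then have "(column j A) $ k = \<xi> $ k * x $ k" by (simp add: M0_mult)
    then show ?thesis using z by (simp add: column_def)
  qed
  then have "row k A = 0" by (simp add: row_def vec_eq_iff)
  then have "det A = 0" by (rule det_zero_row(1))
  then show False using assms(1) invertible_det_nz by blast
qed

theorem lemma4:
  fixes A :: "real^'n^'n" and se2 sg2 \<rho> I :: real
  assumes "se2 > 0" and "sg2 > 0" and "0 \<le> \<rho>" and "\<rho> \<le> 1"
    and "invertible A" and "I > 0"
  shows "D_optimal se2 sg2 \<rho> A I (uniform_design I)"
proof -
  let ?J = "CARD('n)"
  let ?u = "uniform_design I :: real^'n"
  let ?D = "dd se2 sg2 \<rho> (I / real ?J)"
  have Jpos: "real ?J > 0" by simp
  have upos: "\<forall>j. ?u $ j > 0" using assms Jpos by (simp add: uniform_design_def)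
  have detA: "det A \<noteq> 0" using assms(5) invertible_det_nz by blast
  have rk: "rank A = ?J"
    using detA det_eq_0_rank[of A] rank_bound[of A] by linarith
  have des: "is_design I ?u"
    unfolding is_design_def uniform_design_def using assms Jpos by simp
  have est: "estimable A ?u"
    unfolding estimable_def
  proof (intro conjI allI rk)
    fix j
    have "column j A = M0 ?u *v ((real ?J / I) *\<^sub>R column j A)"
      using assms Jpos by (simp add: M0_mult uniform_design_def vec_eq_iff)
    then show "column j A \<in> range (\<lambda>x. M0 ?u *v x)" by blast
  qed
  have Dpos: "?D > 0"
  proof -
    have "0 \<le> sg2 * (1 - \<rho>) * (I / real ?J)" using assms Jpos by simp
    then show ?thesis unfolding dd_def using assms Jpos
      by (intro divide_pos_pos add_pos_nonneg) auto
  qed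
  have FFu: "FF se2 sg2 \<rho> ?u = ?D ^ ?J + sg2 * \<rho> * (real ?J * ?D ^ (?J - 1))"
  proof -
    have "(\<Prod>j\<in>UNIV-{k}. dd se2 sg2 \<rho> (?u $ j)) = ?D ^ (?J - 1)" for k
      by (simp add: uniform_design_def card_Diff_singleton)
    then show ?thesis unfolding FF_def by (simp add: uniform_design_def)
  qed
  show ?thesis
    unfolding D_optimal_def
  proof (intro conjI des est allI impI)
    fix \<xi> :: "real^'n"
    assume h: "is_design I \<xi> \<and> estimable A \<xi>"
    have pos: "\<forall>j. \<xi> $ j > 0"
      using h est_pos[OF assms(5)] unfolding is_design_def by blast
    have sum: "(\<Sum>j\<in>UNIV. \<xi> $ j) = I" using h unfolding is_design_def by blast
    have dpos: "\<forall>j. dd se2 sg2 \<rho> (\<xi> $ j) > 0"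
    proof
      fix j
      have "0 \<le> sg2 * (1 - \<rho>) * \<xi> $ j" using assms pos less_imp_le[OF pos[rule_format, of j]] by simp
      then show "dd se2 sg2 \<rho> (\<xi> $ j) > 0" unfolding dd_def
        by (rule divide_pos_pos[OF add_pos_nonneg[OF assms(1)] pos[rule_format]])
    qed
    have le: "FF se2 sg2 \<rho> ?u \<le> FF se2 sg2 \<rho> \<xi>"
    proof -
      have "?D ^ ?J + sg2 * \<rho> * (real ?J * ?D ^ (?J - 1)) \<le> FF se2 sg2 \<rho> \<xi>"
        unfolding FF_def
        by (rule key_ineq[OF dpos Dpos _ jensen_part[OF pos sum assms(1-4)]]) (use assms in simp)
      then show ?thesis unfolding FFu .
    qed
    have F1: "FF se2 sg2 \<rho> ?u > 0" by (rule FF_pos[OF upos assms(1-4)])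
    have F2: "FF se2 sg2 \<rho> \<xi> > 0" by (rule FF_pos[OF pos assms(1-4)])
    have dA: "det A * det A > 0" using detA not_real_square_gt_zero by blast
    have "det A * det A / FF se2 sg2 \<rho> \<xi> \<le> det A * det A / FF se2 sg2 \<rho> ?u"
      using le F1 dA by (intro divide_left_mono) auto
    moreover have "det A * det A / FF se2 sg2 \<rho> \<xi> > 0" using dA F2 by simp
    ultimately show "ln (det (M_beta se2 sg2 \<rho> A \<xi>)) \<le> ln (det (M_beta se2 sg2 \<rho> A ?u))"
      unfolding det_M_beta[OF pos assms(1-4)] det_M_beta[OF upos assms(1-4)]
      by simp
  qed
qed

end
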